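(* Let $p,n\ge1$, let $\Sigma$ be a real $p\times p$ symmetric positive definite matrix, let $x_1,\dots,x_n$ be i.i.d. $N(0,\Sigma)$ random vectors in $\mathbb{R}^p$, and let $\widehat S=\frac1n\sum_{i=1}^n x_ix_i^T$. Then for each $i\in\{1,\dots,n\}$, almost surely, $$E\left\{\|x_i\|_2^4\,\middle|\,\widehat S\right\}=\frac{n}{n+2}\left[2\,\mathrm{Tr}(\widehat S^2)+\mathrm{Tr}^2(\widehat S)\right].$$
   Context: $\|\cdot\|_2$ is the Euclidean norm, $\mathrm{Tr}$ the trace, and $\mathrm{Tr}^2(A)=(\mathrm{Tr}(A))^2$. *)

theory Defs
  imports "HOL-Probability.Probability"
begin

definition mvn_density :: "real^'p^'p \<Rightarrow> real^'p \<Rightarrow> real" where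
  "mvn_density Sig x =
     exp (- (x \<bullet> (matrix_inv Sig *v x)) / 2)
     / (sqrt ((2 * pi) ^ CARD('p) * det Sig))"

definition sym_pos_def_matrix :: "real^'p^'p \<Rightarrow> bool" where
  "sym_pos_def_matrix A \<longleftrightarrow> transpose A = A \<and> (\<forall>x. x \<noteq> 0 \<longrightarrow> x \<bullet> (A *v x) > 0)"

definition outer :: "real^'p \<Rightarrow> real^'p^'p" where
  "outer x = (\<chi> a b. x $ a * x $ b)"

definition sample_cov :: "nat \<Rightarrow> (nat \<Rightarrow> 'a \<Rightarrow> real^'p) \<Rightarrow> 'a \<Rightarrow> real^'p^'p" where
  "sample_cov n X \<omega> = (1 / real n) *\<^sub>R (\<Sum>i\<in>{1..n}. outer (X i \<omega>))"

end

theory Submission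
  imports Defs
begin
lemma shearU:
  fixes c :: real
  shows "distr (lborel \<Otimes>\<^sub>M lborel) (lborel \<Otimes>\<^sub>M lborel) (\<lambda>(u,v). (u + c *\<^sub>R v, v))
       = (lborel \<Otimes>\<^sub>M lborel :: ('a::euclidean_space \<times> 'a) measure)" (is "?D = ?L")
proof (rule measure_eqI)
  show "sets ?D = sets ?L" by simp
next
  fix E assume "E \<in> sets ?D"
  then have E: "E \<in> sets (lborel \<Otimes>\<^sub>M lborel :: ('a \<times> 'a) measure)" by simp
  have m: "(\<lambda>(u,v). (u + c *\<^sub>R v, v)) \<in> measurable (lborel \<Otimes>\<^sub>M lborel) (lborel \<Otimes>\<^sub>M lborel :: ('a \<times> 'a) measure)"
    by measurable
  have E': "(\<lambda>(u,v). (u + c *\<^sub>R v, v)) -` E \<inter> space (lborel \<Otimes>\<^sub>M lborel) \<in> sets (lborel \<Otimes>\<^sub>M lborel :: ('a \<times> 'a) measure)"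
    using m E by (rule measurable_sets)
  have "emeasure ?D E = emeasure ?L ((\<lambda>(u,v). (u + c *\<^sub>R v, v)) -` E \<inter> space ?L)"
    using m E by (simp add: emeasure_distr)
  also have "\<dots> = (\<integral>\<^sup>+y. emeasure lborel ((\<lambda>x. (x, y)) -` ((\<lambda>(u,v). (u + c *\<^sub>R v, v)) -` E \<inter> space ?L)) \<partial>lborel)"
    using E' by (rule lborel_pair.emeasure_pair_measure_alt2)
  also have "\<dots> = (\<integral>\<^sup>+y. emeasure lborel ((\<lambda>x. (x, y)) -` E) \<partial>lborel)"
  proof (rule nn_integral_cong)
    fix y :: 'a
    have s: "(\<lambda>x. (x, y)) -` E \<in> sets lborel"
      using E by (rule sets_Pair2)
    have "(\<lambda>x. (x, y)) -` ((\<lambda>(u,v). (u + c *\<^sub>R v, v)) -` E \<inter> space ?L) = ((+) (c *\<^sub>R y)) -` ((\<lambda>x. (x, y)) -` E) \<inter> space lborel"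
      by (auto simp: space_pair_measure add.commute)
    also have "emeasure lborel \<dots> = emeasure (distr lborel borel ((+) (c *\<^sub>R y))) ((\<lambda>x. (x, y)) -` E)"
      using s by (subst emeasure_distr) auto
    also have "\<dots> = emeasure lborel ((\<lambda>x. (x, y)) -` E)"
      by (simp add: lborel_distr_plus)
    finally show "emeasure lborel ((\<lambda>x. (x, y)) -` ((\<lambda>(u,v). (u + c *\<^sub>R v, v)) -` E \<inter> space ?L)) = emeasure lborel ((\<lambda>x. (x, y)) -` E)" .
  qed
  also have "\<dots> = emeasure ?L E"
    using E by (rule lborel_pair.emeasure_pair_measure_alt2[symmetric])
  finally show "emeasure ?D E = emeasure ?L E" .
qed

lemma shearL:
  fixes c :: real
  shows "distr (lborel \<Otimes>\<^sub>M lborel) (lborel \<Otimes>\<^sub>M lborel) (\<lambda>(u,v). (u, v + c *\<^sub>R u))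
       = (lborel \<Otimes>\<^sub>M lborel :: ('a::euclidean_space \<times> 'a) measure)" (is "?D = ?L")
proof (rule measure_eqI)
  show "sets ?D = sets ?L" by simp
next
  fix E assume "E \<in> sets ?D"
  then have E: "E \<in> sets (lborel \<Otimes>\<^sub>M lborel :: ('a \<times> 'a) measure)" by simp
  have m: "(\<lambda>(u,v). (u, v + c *\<^sub>R u)) \<in> measurable (lborel \<Otimes>\<^sub>M lborel) (lborel \<Otimes>\<^sub>M lborel :: ('a \<times> 'a) measure)"
    by measurable
  have E': "(\<lambda>(u,v). (u, v + c *\<^sub>R u)) -` E \<inter> space (lborel \<Otimes>\<^sub>M lborel) \<in> sets (lborel \<Otimes>\<^sub>M lborel :: ('a \<times> 'a) measure)"
    using m E by (rule measurable_sets)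
  have "emeasure ?D E = emeasure ?L ((\<lambda>(u,v). (u, v + c *\<^sub>R u)) -` E \<inter> space ?L)"
    using m E by (simp add: emeasure_distr)
  also have "\<dots> = (\<integral>\<^sup>+x. emeasure lborel (Pair x -` ((\<lambda>(u,v). (u, v + c *\<^sub>R u)) -` E \<inter> space ?L)) \<partial>lborel)"
    using E' by (rule lborel.emeasure_pair_measure_alt)
  also have "\<dots> = (\<integral>\<^sup>+x. emeasure lborel (Pair x -` E) \<partial>lborel)"
  proof (rule nn_integral_cong)
    fix x :: 'a
    have s: "Pair x -` E \<in> sets lborel"
      using E by (rule sets_Pair1)
    have "Pair x -` ((\<lambda>(u,v). (u, v + c *\<^sub>R u)) -` E \<inter> space ?L) = ((+) (c *\<^sub>R x)) -` (Pair x -` E) \<inter> space lborel"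
      by (auto simp: space_pair_measure add.commute)
    also have "emeasure lborel \<dots> = emeasure (distr lborel borel ((+) (c *\<^sub>R x))) (Pair x -` E)"
      using s by (subst emeasure_distr) auto
    also have "\<dots> = emeasure lborel (Pair x -` E)"
      by (simp add: lborel_distr_plus)
    finally show "emeasure lborel (Pair x -` ((\<lambda>(u,v). (u, v + c *\<^sub>R u)) -` E \<inter> space ?L)) = emeasure lborel (Pair x -` E)" .
  qed
  also have "\<dots> = emeasure ?L E"
    using E by (rule lborel.emeasure_pair_measure_alt[symmetric])
  finally show "emeasure ?D E = emeasure ?L E" .
qed

definition rot :: "'a::real_vector \<times> 'a \<Rightarrow> 'a \<times> 'a" where
  "rot = (\<lambda>(u,v). ((sqrt 2 / 2) *\<^sub>R (u + v), (sqrt 2 / 2) *\<^sub>R (v - u)))"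

lemma rot_shears:
  "rot = (\<lambda>(u,v). (u + (sqrt 2 - 1) *\<^sub>R v, v)) \<circ> (\<lambda>(u,v). (u, v + (- (sqrt 2 / 2)) *\<^sub>R u))
          \<circ> (\<lambda>(u,v). (u + (sqrt 2 - 1) *\<^sub>R v, v))"
proof -
  let ?a = "sqrt 2 - 1" and ?b = "- (sqrt 2 / 2)" and ?s = "sqrt 2 / 2"
  have s2: "sqrt 2 * sqrt 2 = (2::real)" by simp
  have c1: "1 + ?a * ?b = ?s" using s2 by (simp add: algebra_simps) (simp add: field_simps)
  have c2: "?a + ?a + ?a * ?a * ?b = ?s" using s2 by (simp add: algebra_simps)
  show ?thesis
  proof (rule ext)
    fix p :: "'a \<times> 'a"
    obtain u v where p: "p = (u, v)" by (cases p)
    have g1: "\<And>a b. u + a *\<^sub>R v + a *\<^sub>R (v + b *\<^sub>R (u + a *\<^sub>R v)) = (1 + a * b) *\<^sub>R u + (a + a + a * a * b) *\<^sub>R v"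
      by (simp add: algebra_simps) (metis mult_2_right scaleR_left_distrib)
    have "u + ?a *\<^sub>R v + ?a *\<^sub>R (v + ?b *\<^sub>R (u + ?a *\<^sub>R v)) = (1 + ?a * ?b) *\<^sub>R u + (?a + ?a + ?a * ?a * ?b) *\<^sub>R v"
      by (rule g1)
    also have "\<dots> = ?s *\<^sub>R (u + v)" by (simp only: c1 c2 scaleR_add_right)
    finally have e1: "u + ?a *\<^sub>R v + ?a *\<^sub>R (v + ?b *\<^sub>R (u + ?a *\<^sub>R v)) = ?s *\<^sub>R (u + v)" .
    have g2: "\<And>a b. v + b *\<^sub>R (u + a *\<^sub>R v) = b *\<^sub>R u + (1 + a * b) *\<^sub>R v"
      by (simp add: algebra_simps)
    have "v + ?b *\<^sub>R (u + ?a *\<^sub>R v) = ?b *\<^sub>R u + (1 + ?a * ?b) *\<^sub>R v"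
      by (rule g2)
    also have "\<dots> = ?s *\<^sub>R (v - u)" by (simp only: c1) (simp add: algebra_simps)
    finally have e2: "v + ?b *\<^sub>R (u + ?a *\<^sub>R v) = ?s *\<^sub>R (v - u)" .
    show "rot p = ((\<lambda>(u,v). (u + (sqrt 2 - 1) *\<^sub>R v, v)) \<circ> (\<lambda>(u,v). (u, v + (- (sqrt 2 / 2)) *\<^sub>R u))
          \<circ> (\<lambda>(u,v). (u + (sqrt 2 - 1) *\<^sub>R v, v))) p"
      using e1 e2 by (simp add: p rot_def)
  qed
qed

lemma rot_lborel:
  "distr (lborel \<Otimes>\<^sub>M lborel) (lborel \<Otimes>\<^sub>M lborel) rot = (lborel \<Otimes>\<^sub>M lborel :: ('a::euclidean_space \<times> 'a) measure)"
proof -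
  let ?L = "lborel \<Otimes>\<^sub>M lborel :: ('a \<times> 'a) measure"
  let ?U = "(\<lambda>(u,v). (u + (sqrt 2 - 1) *\<^sub>R v, v)) :: 'a \<times> 'a \<Rightarrow> _"
  let ?V = "(\<lambda>(u,v). (u, v + (- (sqrt 2 / 2)) *\<^sub>R u)) :: 'a \<times> 'a \<Rightarrow> _"
  have mU: "?U \<in> measurable ?L ?L" by measurable
  have mV: "?V \<in> measurable ?L ?L" by measurable
  have "distr ?L ?L rot = distr (distr (distr ?L ?L ?U) ?L ?V) ?L ?U"
    by (simp add: distr_distr mU mV rot_shears comp_assoc)
  also have "\<dots> = ?L" by (simp only: shearU shearL)
  finally show ?thesis .
qed

lemma rot_measurable[measurable]:
  "rot \<in> measurable (borel \<Otimes>\<^sub>M borel) (borel \<Otimes>\<^sub>M (borel :: ('a::euclidean_space) measure))"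
  unfolding rot_def by measurable

lemma density_rot_invariant:
  fixes \<phi> :: "'a::euclidean_space \<Rightarrow> ennreal"
  assumes phi[measurable]: "\<phi> \<in> borel_measurable borel"
    and sf: "sigma_finite_measure (density lborel \<phi>)"
    and inv: "\<And>p. \<phi> (fst p) * \<phi> (snd p) = \<phi> (fst (rot p)) * \<phi> (snd (rot p))"
  shows "distr (density lborel \<phi> \<Otimes>\<^sub>M density lborel \<phi>) (borel \<Otimes>\<^sub>M borel) rot
       = density lborel \<phi> \<Otimes>\<^sub>M density lborel \<phi>"
proof -
  let ?L = "lborel \<Otimes>\<^sub>M lborel :: ('a \<times> 'a) measure"
  define \<psi> where "\<psi> = (\<lambda>p::'a \<times> 'a. \<phi> (fst p) * \<phi> (snd p))"
  have psi[measurable]: "\<psi> \<in> borel_measurable ?L" unfolding \<psi>_def by measurable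
  have psir: "\<And>p. \<psi> (rot p) = \<psi> p" unfolding \<psi>_def by (rule inv[symmetric])
  have eq: "density lborel \<phi> \<Otimes>\<^sub>M density lborel \<phi> = density ?L \<psi>"
    unfolding \<psi>_def
    by (subst pair_measure_density) (auto simp: case_prod_beta' intro: sf lborel.sigma_finite_measure_axioms)
  have mr: "rot \<in> measurable ?L ?L" unfolding rot_def by measurable
  have sL: "sets ?L = sets (borel \<Otimes>\<^sub>M borel)" by (rule sets_pair_measure_cong) simp_all
  show ?thesis unfolding eq
  proof (rule measure_eqI)
    show "sets (distr (density ?L \<psi>) (borel \<Otimes>\<^sub>M borel) rot) = sets (density ?L \<psi>)"
      by (simp add: sL)
  next
    fix E assume "E \<in> sets (distr (density ?L \<psi>) (borel \<Otimes>\<^sub>M borel) rot)"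
    then have E[measurable]: "E \<in> sets ?L" by (simp add: sL)
    have "emeasure (distr (density ?L \<psi>) (borel \<Otimes>\<^sub>M borel) rot) E
        = emeasure (density ?L \<psi>) (rot -` E \<inter> space ?L)"
      using mr E by (subst emeasure_distr) (auto simp: sL measurable_cong_sets[OF _ sL])
    also have "\<dots> = (\<integral>\<^sup>+p. \<psi> p * indicator (rot -` E \<inter> space ?L) p \<partial>?L)"
      using measurable_sets[OF mr E] by (subst emeasure_density) (auto simp: mult.commute)
    also have "\<dots> = (\<integral>\<^sup>+p. \<psi> (rot p) * indicator E (rot p) \<partial>?L)"
      by (intro nn_integral_cong) (auto simp: psir space_pair_measure split: split_indicator)
    also have "\<dots> = (\<integral>\<^sup>+p. \<psi> p * indicator E p \<partial>(distr ?L ?L rot))"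
      using mr by (subst nn_integral_distr) auto
    also have "\<dots> = (\<integral>\<^sup>+p. \<psi> p * indicator E p \<partial>?L)"
      by (simp only: rot_lborel)
    also have "\<dots> = emeasure (density ?L \<psi>) E"
      using E by (subst emeasure_density) (auto simp: mult.commute)
    finally show "emeasure (distr (density ?L \<psi>) (borel \<Otimes>\<^sub>M borel) rot) E = emeasure (density ?L \<psi>) E" .
  qed
qed

lemma (in prob_space) pair_transform_gen:
  fixes X :: "nat \<Rightarrow> 'a \<Rightarrow> 'b::euclidean_space"
  assumes ind: "indep_vars (\<lambda>_. borel) X I"
    and ab: "a \<in> I" "b \<in> I" "a \<noteq> b"
    and da: "distr M borel (X a) = \<nu>" and db: "distr M borel (X b) = \<nu>"
    and T[measurable]: "T \<in> measurable (borel \<Otimes>\<^sub>M borel) (borel \<Otimes>\<^sub>M borel)"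
    and Tinv: "distr (\<nu> \<Otimes>\<^sub>M \<nu>) (borel \<Otimes>\<^sub>M borel) T = \<nu> \<Otimes>\<^sub>M \<nu>"
    and G[measurable]: "G \<in> borel_measurable ((borel \<Otimes>\<^sub>M borel) \<Otimes>\<^sub>M PiM (I - {a,b}) (\<lambda>_. borel))"
  shows "(\<integral>\<^sup>+\<omega>. G ((X a \<omega>, X b \<omega>), restrict (\<lambda>j. X j \<omega>) (I - {a,b})) \<partial>M)
       = (\<integral>\<^sup>+\<omega>. G (T (X a \<omega>, X b \<omega>), restrict (\<lambda>j. X j \<omega>) (I - {a,b})) \<partial>M)"
proof -
  let ?K = "I - {a,b}"
  define P where "P = (\<lambda>\<omega>. (X a \<omega>, X b \<omega>))"
  define R where "R = (\<lambda>\<omega>. restrict (\<lambda>j. X j \<omega>) ?K)"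
  have i1: "indep_var (PiM {a,b} (\<lambda>_. borel)) (\<lambda>\<omega>. restrict (\<lambda>i. X i \<omega>) {a,b})
                      (PiM ?K (\<lambda>_. borel)) (\<lambda>\<omega>. restrict (\<lambda>i. X i \<omega>) ?K)"
    using ab by (intro indep_var_restrict[OF ind]) auto
  have m1: "(\<lambda>f. (f a, f b)) \<in> measurable (PiM {a,b} (\<lambda>_. borel)) (borel \<Otimes>\<^sub>M (borel :: 'b measure))"
    by (intro measurable_Pair measurable_component_singleton) auto
  have i2: "indep_var (PiM {a} (\<lambda>_. borel)) (\<lambda>\<omega>. restrict (\<lambda>i. X i \<omega>) {a})
                      (PiM {b} (\<lambda>_. borel)) (\<lambda>\<omega>. restrict (\<lambda>i. X i \<omega>) {b})"
    using ab by (intro indep_var_restrict[OF ind]) auto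
  have iab: "indep_var borel (X a) borel (X b)"
    using indep_var_compose[OF i2 measurable_component_singleton[of a "{a}" "\<lambda>_. borel"]
        measurable_component_singleton[of b "{b}" "\<lambda>_. borel"]]
    unfolding comp_def by simp
  have dP: "distr M (borel \<Otimes>\<^sub>M borel) P = \<nu> \<Otimes>\<^sub>M \<nu>"
    using iab da db by (simp add: indep_var_distribution_eq P_def)
  have mP: "random_variable (borel \<Otimes>\<^sub>M borel) P"
    using iab unfolding P_def by (auto simp: indep_var_distribution_eq)
  have mA: "random_variable (PiM {a,b} (\<lambda>_. borel)) (\<lambda>\<omega>. restrict (\<lambda>i. X i \<omega>) {a,b})"
    and mR: "random_variable (PiM ?K (\<lambda>_. borel)) R"
    using i1 unfolding R_def by (auto simp: indep_var_distribution_eq)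
  have dAR: "distr M (PiM {a,b} (\<lambda>_. borel)) (\<lambda>\<omega>. restrict (\<lambda>i. X i \<omega>) {a,b}) \<Otimes>\<^sub>M distr M (PiM ?K (\<lambda>_. borel)) R
     = distr M (PiM {a,b} (\<lambda>_. borel) \<Otimes>\<^sub>M PiM ?K (\<lambda>_. borel)) (\<lambda>\<omega>. (restrict (\<lambda>i. X i \<omega>) {a,b}, R \<omega>))"
    using i1 unfolding R_def by (simp add: indep_var_distribution_eq)
  have pR0: "prob_space (distr M (PiM ?K (\<lambda>_. borel)) R)" using prob_space_distr[OF mR] .
  have sfid0: "sigma_finite_measure (distr (distr M (PiM ?K (\<lambda>_. borel)) R) (PiM ?K (\<lambda>_. borel)) (\<lambda>r. r))"
    using pR0 by (simp add: distr_id2 prob_space_imp_sigma_finite)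
  have dPR: "distr M ((borel \<Otimes>\<^sub>M borel) \<Otimes>\<^sub>M PiM ?K (\<lambda>_. borel)) (\<lambda>\<omega>. (P \<omega>, R \<omega>)) = (\<nu> \<Otimes>\<^sub>M \<nu>) \<Otimes>\<^sub>M distr M (PiM ?K (\<lambda>_. borel)) R"
  proof -
    have "distr M ((borel \<Otimes>\<^sub>M borel) \<Otimes>\<^sub>M PiM ?K (\<lambda>_. borel)) (\<lambda>\<omega>. (P \<omega>, R \<omega>))
      = distr (distr M (PiM {a,b} (\<lambda>_. borel) \<Otimes>\<^sub>M PiM ?K (\<lambda>_. borel)) (\<lambda>\<omega>. (restrict (\<lambda>i. X i \<omega>) {a,b}, R \<omega>)))
          ((borel \<Otimes>\<^sub>M borel) \<Otimes>\<^sub>M PiM ?K (\<lambda>_. borel)) (\<lambda>(f, g). ((f a, f b), g))"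
      using mA mR m1 by (subst distr_distr) (auto simp: comp_def P_def)
    also have "\<dots> = distr (distr M (PiM {a,b} (\<lambda>_. borel)) (\<lambda>\<omega>. restrict (\<lambda>i. X i \<omega>) {a,b}) \<Otimes>\<^sub>M distr M (PiM ?K (\<lambda>_. borel)) R)
          ((borel \<Otimes>\<^sub>M borel) \<Otimes>\<^sub>M PiM ?K (\<lambda>_. borel)) (\<lambda>(f, g). ((f a, f b), g))"
      by (simp only: dAR)
    also have "\<dots> = distr (distr M (PiM {a,b} (\<lambda>_. borel)) (\<lambda>\<omega>. restrict (\<lambda>i. X i \<omega>) {a,b})) (borel \<Otimes>\<^sub>M borel) (\<lambda>f. (f a, f b))
        \<Otimes>\<^sub>M distr (distr M (PiM ?K (\<lambda>_. borel)) R) (PiM ?K (\<lambda>_. borel)) (\<lambda>r. r)"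
      by (rule pair_measure_distr[symmetric]) (use m1 sfid0 in \<open>auto simp: measurable_ident_sets\<close>)
    also have "\<dots> = (\<nu> \<Otimes>\<^sub>M \<nu>) \<Otimes>\<^sub>M distr M (PiM ?K (\<lambda>_. borel)) R"
      using mA m1 ab dP by (simp add: distr_distr distr_id2 comp_def P_def)
    finally show ?thesis .
  qed
  have pnu: "prob_space (\<nu> \<Otimes>\<^sub>M \<nu>)" using prob_space_distr[OF mP] dP by simp
  have pR: "prob_space (distr M (PiM ?K (\<lambda>_. borel)) R)" using prob_space_distr[OF mR] .
  have snu: "sets (\<nu> \<Otimes>\<^sub>M \<nu>) = sets (borel \<Otimes>\<^sub>M (borel :: 'b measure))"
    by (metis dP sets_distr)
  have mT: "T \<in> measurable (\<nu> \<Otimes>\<^sub>M \<nu>) (borel \<Otimes>\<^sub>M borel)"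
    using T by (simp add: measurable_cong_sets[OF snu refl])
  have mid: "(\<lambda>r. r) \<in> measurable (distr M (PiM ?K (\<lambda>_. borel)) R) (PiM ?K (\<lambda>_. borel))"
    by (simp add: measurable_ident_sets)
  have sfid: "sigma_finite_measure (distr (distr M (PiM ?K (\<lambda>_. borel)) R) (PiM ?K (\<lambda>_. borel)) (\<lambda>r. r))"
    using pR by (simp add: distr_id2 prob_space_imp_sigma_finite)
  have key: "distr ((\<nu> \<Otimes>\<^sub>M \<nu>) \<Otimes>\<^sub>M distr M (PiM ?K (\<lambda>_. borel)) R) ((borel \<Otimes>\<^sub>M borel) \<Otimes>\<^sub>M PiM ?K (\<lambda>_. borel)) (\<lambda>(p,r). (T p, r))
        = (\<nu> \<Otimes>\<^sub>M \<nu>) \<Otimes>\<^sub>M distr M (PiM ?K (\<lambda>_. borel)) R"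
  proof -
    have "distr (\<nu> \<Otimes>\<^sub>M \<nu>) (borel \<Otimes>\<^sub>M borel) T \<Otimes>\<^sub>M distr (distr M (PiM ?K (\<lambda>_. borel)) R) (PiM ?K (\<lambda>_. borel)) (\<lambda>r. r)
        = distr ((\<nu> \<Otimes>\<^sub>M \<nu>) \<Otimes>\<^sub>M distr M (PiM ?K (\<lambda>_. borel)) R) ((borel \<Otimes>\<^sub>M borel) \<Otimes>\<^sub>M PiM ?K (\<lambda>_. borel)) (\<lambda>(x, y). (T x, y))"
      by (rule pair_measure_distr[OF mT mid sfid])
    then show ?thesis by (simp add: Tinv distr_id2)
  qed
  have mPR: "(\<lambda>\<omega>. (P \<omega>, R \<omega>)) \<in> measurable M ((borel \<Otimes>\<^sub>M borel) \<Otimes>\<^sub>M PiM ?K (\<lambda>_. borel))"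
    using mP mR by measurable
  have "(\<integral>\<^sup>+\<omega>. G (P \<omega>, R \<omega>) \<partial>M) = (\<integral>\<^sup>+z. G z \<partial>distr M ((borel \<Otimes>\<^sub>M borel) \<Otimes>\<^sub>M PiM ?K (\<lambda>_. borel)) (\<lambda>\<omega>. (P \<omega>, R \<omega>)))"
    using mPR by (subst nn_integral_distr) auto
  also have "\<dots> = (\<integral>\<^sup>+z. G z \<partial>((\<nu> \<Otimes>\<^sub>M \<nu>) \<Otimes>\<^sub>M distr M (PiM ?K (\<lambda>_. borel)) R))" by (simp only: dPR)
  also have "\<dots> = (\<integral>\<^sup>+z. G z \<partial>distr ((\<nu> \<Otimes>\<^sub>M \<nu>) \<Otimes>\<^sub>M distr M (PiM ?K (\<lambda>_. borel)) R) ((borel \<Otimes>\<^sub>M borel) \<Otimes>\<^sub>M PiM ?K (\<lambda>_. borel)) (\<lambda>(p,r). (T p, r)))"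
    by (simp only: key)
  also have "\<dots> = (\<integral>\<^sup>+z. G (T (fst z), snd z) \<partial>((\<nu> \<Otimes>\<^sub>M \<nu>) \<Otimes>\<^sub>M distr M (PiM ?K (\<lambda>_. borel)) R))"
  proof -
    have mm: "(\<lambda>(p,r). (T p, r)) \<in> measurable ((\<nu> \<Otimes>\<^sub>M \<nu>) \<Otimes>\<^sub>M distr M (PiM ?K (\<lambda>_. borel)) R) ((borel \<Otimes>\<^sub>M borel) \<Otimes>\<^sub>M PiM ?K (\<lambda>_. borel))"
      using mT by measurable
    show ?thesis using mm by (subst nn_integral_distr) (auto simp: case_prod_beta')
  qed
  also have "\<dots> = (\<integral>\<^sup>+z. G (T (fst z), snd z) \<partial>distr M ((borel \<Otimes>\<^sub>M borel) \<Otimes>\<^sub>M PiM ?K (\<lambda>_. borel)) (\<lambda>\<omega>. (P \<omega>, R \<omega>)))"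
    by (simp only: dPR)
  also have "\<dots> = (\<integral>\<^sup>+\<omega>. G (T (P \<omega>), R \<omega>) \<partial>M)"
    using mPR by (subst nn_integral_distr) auto
  finally show ?thesis unfolding P_def R_def .
qed

lemma continuous_outer: "continuous_on UNIV (outer :: real^'p \<Rightarrow> real^'p^'p)"
  unfolding outer_def by (intro continuous_on_vec_lambda continuous_intros)

lemma outer_measurable[measurable]: "outer \<in> borel_measurable (borel :: (real^'p) measure)"
  by (rule borel_measurable_continuous_onI[OF continuous_outer])

lemma continuous_trace: "continuous_on UNIV (trace :: real^'p^'p \<Rightarrow> real)"
  unfolding trace_def by (intro continuous_intros)

lemma trace_measurable[measurable]: "trace \<in> borel_measurable (borel :: (real^'p^'p) measure)"
  by (rule borel_measurable_continuous_onI[OF continuous_trace])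

lemma continuous_msq: "continuous_on UNIV (\<lambda>A::real^'p^'p. A ** A)"
  unfolding matrix_matrix_mult_def by (intro continuous_on_vec_lambda continuous_intros)

lemma msq_measurable[measurable]: "(\<lambda>A::real^'p^'p. A ** A) \<in> borel_measurable borel"
  by (rule borel_measurable_continuous_onI[OF continuous_msq])

lemma sum_outer_nth: "(\<Sum>j\<in>J. outer (f j)) $ k $ l = (\<Sum>j\<in>J. f j $ k * f j $ l)"
  by (simp add: outer_def sum_component)

lemma trace_scaled_outer:
  fixes f :: "nat \<Rightarrow> real^'p"
  shows "trace (c *\<^sub>R (\<Sum>j\<in>J. outer (f j))) = c * (\<Sum>j\<in>J. f j \<bullet> f j)"
  by (simp add: trace_def outer_def sum_component inner_vec_def sum_distrib_left) (rule sum.swap)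

lemma trace_sq_scaled_outer:
  fixes f :: "nat \<Rightarrow> real^'p"
  shows "trace ((c *\<^sub>R (\<Sum>j\<in>J. outer (f j))) ** (c *\<^sub>R (\<Sum>j\<in>J. outer (f j))))
       = c^2 * (\<Sum>a\<in>J. \<Sum>b\<in>J. (f a \<bullet> f b)^2)"
proof -
  have "trace ((c *\<^sub>R (\<Sum>j\<in>J. outer (f j))) ** (c *\<^sub>R (\<Sum>j\<in>J. outer (f j))))
      = (\<Sum>k\<in>UNIV. \<Sum>l\<in>UNIV. (c * (\<Sum>a\<in>J. f a $ k * f a $ l)) * (c * (\<Sum>b\<in>J. f b $ l * f b $ k)))"
    by (simp add: trace_def matrix_matrix_mult_def outer_def sum_component)
  also have "\<dots> = c^2 * (\<Sum>k\<in>UNIV. \<Sum>l\<in>UNIV. \<Sum>a\<in>J. \<Sum>b\<in>J. (f a $ k * f b $ k) * (f a $ l * f b $ l))"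
    by (simp add: sum_product sum_distrib_left power2_eq_square algebra_simps)
  also have "\<dots> = c^2 * (\<Sum>a\<in>J. \<Sum>b\<in>J. \<Sum>k\<in>UNIV. \<Sum>l\<in>UNIV. (f a $ k * f b $ k) * (f a $ l * f b $ l))"
    by (subst sum.swap, subst (2) sum.swap, subst (3) sum.swap, simp add: sum.swap[of _ UNIV J])
  also have "\<dots> = c^2 * (\<Sum>a\<in>J. \<Sum>b\<in>J. (f a \<bullet> f b)^2)"
    by (simp add: inner_vec_def power2_eq_square sum_product)
  finally show ?thesis .
qed

lemma s2half: "(sqrt 2 / 2) * (sqrt 2 / 2) = (1/2::real)"
  by (simp add: field_simps)

lemma rot_inner1: "fst (rot (u,v)) \<bullet> fst (rot (u,v)) = (u \<bullet> u + 2 * (u \<bullet> v) + v \<bullet> v) / 2"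
proof -
  have "fst (rot (u,v)) \<bullet> fst (rot (u,v)) = ((sqrt 2 / 2) * (sqrt 2 / 2)) * ((u + v) \<bullet> (u + v))"
    by (simp add: rot_def)
  also have "\<dots> = (u \<bullet> u + 2 * (u \<bullet> v) + v \<bullet> v) / 2"
    by (simp only: s2half) (simp add: inner_add_left inner_add_right inner_commute[of v u])
  finally show ?thesis .
qed

lemma rot_inner2: "snd (rot (u,v)) \<bullet> snd (rot (u,v)) = (u \<bullet> u - 2 * (u \<bullet> v) + v \<bullet> v) / 2"
proof -
  have "snd (rot (u,v)) \<bullet> snd (rot (u,v)) = ((sqrt 2 / 2) * (sqrt 2 / 2)) * ((v - u) \<bullet> (v - u))"
    by (simp add: rot_def)
  also have "\<dots> = (u \<bullet> u - 2 * (u \<bullet> v) + v \<bullet> v) / 2"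
    by (simp only: s2half) (simp add: inner_diff_left inner_diff_right inner_commute[of v u])
  finally show ?thesis .
qed

lemma rot_norm4:
  fixes u v :: "'a::real_inner"
  shows "norm (fst (rot (u,v))) ^ 4 + norm (snd (rot (u,v))) ^ 4
       = 2 * (u \<bullet> v)^2 + (u \<bullet> u) * (v \<bullet> v) + (norm u ^ 4 + norm v ^ 4) / 2"
proof -
  have n4: "\<And>x::'a. norm x ^ 4 = (x \<bullet> x)^2"
    by (metis power2_norm_eq_inner power_mult numeral_Bit0 mult_2_right numeral_One power_even_eq)
  show ?thesis unfolding n4 rot_inner1 rot_inner2
    by (simp add: power2_eq_square field_simps)
qed

lemma rot_outer: "outer (fst (rot (u,v))) + outer (snd (rot (u,v))) = outer u + outer (v :: real^'p)"
proof -
  have "\<And>k l. (sqrt 2 / 2) * (u $ k + v $ k) * ((sqrt 2 / 2) * (u $ l + v $ l))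
      + (sqrt 2 / 2) * (v $ k - u $ k) * ((sqrt 2 / 2) * (v $ l - u $ l)) = u $ k * u $ l + v $ k * v $ l"
  proof -
    fix k l
    have gen: "\<And>s a b c d::real. s * a * (s * b) + s * c * (s * d) = (s * s) * (a * b + c * d)"
      by (simp add: algebra_simps)
    have "(sqrt 2 / 2) * (u $ k + v $ k) * ((sqrt 2 / 2) * (u $ l + v $ l))
      + (sqrt 2 / 2) * (v $ k - u $ k) * ((sqrt 2 / 2) * (v $ l - u $ l))
      = ((sqrt 2 / 2) * (sqrt 2 / 2)) * ((u $ k + v $ k) * (u $ l + v $ l) + (v $ k - u $ k) * (v $ l - u $ l))"
      by (rule gen)
    also have "\<dots> = u $ k * u $ l + v $ k * v $ l" by (simp only: s2half) (simp add: field_simps)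
    finally show "?thesis k l" .
  qed
  then show ?thesis by (simp add: outer_def rot_def vec_eq_iff)
qed

lemma quad_rot:
  fixes A :: "real^'p^'p"
  shows "fst (rot (u,v)) \<bullet> (A *v fst (rot (u,v))) + snd (rot (u,v)) \<bullet> (A *v snd (rot (u,v)))
       = u \<bullet> (A *v u) + v \<bullet> (A *v v)"
proof -
  have "fst (rot (u,v)) \<bullet> (A *v fst (rot (u,v))) + snd (rot (u,v)) \<bullet> (A *v snd (rot (u,v)))
     = ((sqrt 2 / 2) * (sqrt 2 / 2)) * ((u + v) \<bullet> (A *v (u + v)) + (v - u) \<bullet> (A *v (v - u)))"
  proof -
    have gen: "\<And>s::real. (s *\<^sub>R (u + v)) \<bullet> (A *v (s *\<^sub>R (u + v))) + (s *\<^sub>R (v - u)) \<bullet> (A *v (s *\<^sub>R (v - u)))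
       = (s * s) * ((u + v) \<bullet> (A *v (u + v)) + (v - u) \<bullet> (A *v (v - u)))"
      by (simp add: matrix_vector_mult_scaleR algebra_simps)
    show ?thesis unfolding rot_def by (simp only: prod.case fst_conv snd_conv gen)
  qed
  also have "\<dots> = u \<bullet> (A *v u) + v \<bullet> (A *v v)"
    by (simp only: s2half) (simp add: matrix_vector_right_distrib matrix_vector_mult_diff_distrib inner_add_left inner_add_right inner_diff_left inner_diff_right algebra_simps)
  finally show ?thesis .
qed

lemma mvn_rot:
  "mvn_density Sig (fst (rot p)) * mvn_density Sig (snd (rot p)) = mvn_density Sig (fst p) * mvn_density Sig (snd p)"
proof -
  obtain u v where p: "p = (u,v)" by (cases p)
  let ?A = "matrix_inv Sig"
  have q: "fst (rot (u,v)) \<bullet> (?A *v fst (rot (u,v))) + snd (rot (u,v)) \<bullet> (?A *v snd (rot (u,v)))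
       = u \<bullet> (?A *v u) + v \<bullet> (?A *v v)" by (rule quad_rot)
  have e: "\<And>a b c d::real. a + b = c + d \<Longrightarrow> exp (- a / 2) * exp (- b / 2) = exp (- c / 2) * exp (- d / 2)"
    by (simp add: exp_add[symmetric] field_simps)
  show ?thesis unfolding p mvn_density_def using e[OF q] by simp
qed

lemma swap_invariant:
  assumes "sigma_finite_measure \<nu>" and sn: "sets \<nu> = sets (borel :: 'b::topological_space measure)"
  shows "distr (\<nu> \<Otimes>\<^sub>M \<nu>) (borel \<Otimes>\<^sub>M borel) (\<lambda>(x,y). (y,x)) = (\<nu> \<Otimes>\<^sub>M \<nu> :: ('b \<times> 'b) measure)"
proof -
  interpret pair_sigma_finite \<nu> \<nu> using assms(1) by (simp add: pair_sigma_finite_def)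
  have "\<nu> \<Otimes>\<^sub>M \<nu> = distr (\<nu> \<Otimes>\<^sub>M \<nu>) (\<nu> \<Otimes>\<^sub>M \<nu>) (\<lambda>(x,y). (y,x))" by (rule distr_pair_swap)
  also have "\<dots> = distr (\<nu> \<Otimes>\<^sub>M \<nu>) (borel \<Otimes>\<^sub>M borel) (\<lambda>(x,y). (y,x))"
    by (rule distr_cong) (rule refl, rule sets_pair_measure_cong[OF sn sn], simp)
  finally show ?thesis by simp
qed

lemma sum_split2:
  assumes "finite I" "a \<in> I" "b \<in> I" "a \<noteq> b"
  shows "sum g I = g a + g b + sum g (I - {a,b})"
proof -
  have "sum g I = g a + sum g (I - {a})" using assms by (simp add: sum.remove)
  also have "sum g (I - {a}) = g b + sum g (I - {a} - {b})" using assms by (simp add: sum.remove)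
  also have "I - {a} - {b} = I - {a,b}" by auto
  finally show ?thesis by (simp add: add.assoc)
qed

lemma mvn_rot_enn:
  "ennreal (mvn_density Sig (fst (rot p))) * ennreal (mvn_density Sig (snd (rot p)))
   = ennreal (mvn_density Sig (fst p)) * ennreal (mvn_density Sig (snd p))"
proof (cases "sqrt ((2 * pi) ^ CARD('a) * det (Sig :: real^'a^'a)) \<ge> 0")
  case True
  then have nn: "\<And>x. mvn_density Sig x \<ge> 0" by (simp add: mvn_density_def)
  show ?thesis using mvn_rot[of Sig p] by (simp add: ennreal_mult[symmetric] nn)
next
  case False
  then have nn: "\<And>x. mvn_density Sig x \<le> 0"
    by (auto simp: mvn_density_def divide_nonneg_neg intro!: divide_nonneg_neg less_imp_le)
  show ?thesis by (simp add: ennreal_neg nn)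
qed

definition hfun :: "nat \<Rightarrow> real^'p^'p \<Rightarrow> real" where
  "hfun n A = real n / (real n + 2) * (2 * trace (A ** A) + (trace A)^2)"

lemma hfun_measurable[measurable]: "hfun n \<in> borel_measurable borel"
  unfolding hfun_def by measurable

lemma hfun_sum:
  fixes f :: "nat \<Rightarrow> real^'p"
  assumes "n \<ge> 1"
  shows "real n * (real n + 2) * hfun n ((1 / real n) *\<^sub>R (\<Sum>j\<in>{1..n}. outer (f j)))
       = (\<Sum>a\<in>{1..n}. \<Sum>b\<in>{1..n}. 2 * (f a \<bullet> f b)^2 + (f a \<bullet> f a) * (f b \<bullet> f b))"
proof -
  have sq: "(\<Sum>a\<in>{1..n}. f a \<bullet> f a)^2 = (\<Sum>a\<in>{1..n}. \<Sum>b\<in>{1..n}. (f a \<bullet> f a) * (f b \<bullet> f b))"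
    by (simp add: power2_eq_square sum_product)
  have np: "real n > 0" using assms by simp
  define T1 where "T1 = (\<Sum>a\<in>{1..n}. f a \<bullet> f a)"
  define T2 where "T2 = (\<Sum>a\<in>{1..n}. \<Sum>b\<in>{1..n}. (f a \<bullet> f b)^2)"
  have "hfun n ((1 / real n) *\<^sub>R (\<Sum>j\<in>{1..n}. outer (f j)))
      = real n / (real n + 2) * (2 * ((1 / real n)^2 * T2) + ((1 / real n) * T1)^2)"
    unfolding hfun_def trace_sq_scaled_outer trace_scaled_outer T1_def T2_def ..
  moreover have "\<And>t1 t2. real n * (real n + 2) * (real n / (real n + 2) * (2 * ((1 / real n)^2 * t2) + ((1 / real n) * t1)^2))
      = 2 * t2 + t1^2"
  proof -
    fix t1 t2 :: real
    have np2: "real n + 2 \<noteq> 0" "real n \<noteq> 0" using np by simp_all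
    show "real n * (real n + 2) * (real n / (real n + 2) * (2 * ((1 / real n)^2 * t2) + ((1 / real n) * t1)^2))
      = 2 * t2 + t1^2"
    proof -
      have a: "(real n + 2) * (real n / (real n + 2)) = real n" using np2 by simp
      have "real n * (real n + 2) * (real n / (real n + 2) * (2 * ((1 / real n)^2 * t2) + ((1 / real n) * t1)^2))
          = real n * ((real n + 2) * (real n / (real n + 2))) * (2 * ((1 / real n)^2 * t2) + ((1 / real n) * t1)^2)"
        by (simp only: mult.assoc)
      also have "\<dots> = (real n * real n) * (2 * ((1 / real n)^2 * t2) + ((1 / real n) * t1)^2)"
        by (simp only: a)
      also have "\<dots> = 2 * t2 + t1^2" using np2 by (simp add: power2_eq_square field_simps)
      finally show ?thesis .
    qed
  qed
  moreover have "(\<Sum>a\<in>{1..n}. \<Sum>b\<in>{1..n}. 2 * (f a \<bullet> f b)^2 + (f a \<bullet> f a) * (f b \<bullet> f b)) = 2 * T2 + T1^2"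
    unfolding sq T1_def T2_def by (simp add: sum.distrib sum_distrib_left)
  ultimately show ?thesis by simp
qed

lemma core:
  fixes M :: "'a measure" and X :: "nat \<Rightarrow> 'a \<Rightarrow> real^'p" and \<nu> :: "(real^'p) measure"
  assumes P: "prob_space M" and n1: "n \<ge> 1"
    and indep: "prob_space.indep_vars M (\<lambda>_. borel) X {1..n}"
    and mX: "\<And>j. j \<in> {1..n} \<Longrightarrow> X j \<in> borel_measurable M"
    and dX: "\<And>j. j \<in> {1..n} \<Longrightarrow> distr M borel (X j) = \<nu>"
    and rotinv: "distr (\<nu> \<Otimes>\<^sub>M \<nu>) (borel \<Otimes>\<^sub>M borel) rot = \<nu> \<Otimes>\<^sub>M \<nu>"
    and i: "i \<in> {1..n}" and B[measurable]: "B \<in> sets borel"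
  shows "(\<integral>\<^sup>+\<omega>. ennreal (norm (X i \<omega>)^4 * indicator B (sample_cov n X \<omega>)) \<partial>M)
       = (\<integral>\<^sup>+\<omega>. ennreal (hfun n (sample_cov n X \<omega>) * indicator B (sample_cov n X \<omega>)) \<partial>M)"
proof -
  interpret prob_space M by (rule P)
  let ?I = "{1..n}"
  define S where "S = sample_cov n X"
  define ind where "ind = (\<lambda>\<omega>. indicator B (S \<omega>) :: real)"
  define J where "J = (\<lambda>a. \<integral>\<^sup>+\<omega>. ennreal (norm (X a \<omega>)^4 * ind \<omega>) \<partial>M)"
  define kk where "kk = (\<lambda>a b \<omega>. 2 * (X a \<omega> \<bullet> X b \<omega>)^2 + (X a \<omega> \<bullet> X a \<omega>) * (X b \<omega> \<bullet> X b \<omega>))"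
  have pnu: "prob_space \<nu>" using prob_space_distr[OF mX[OF i]] dX[OF i] by simp
  have snu: "sets \<nu> = sets borel" using dX[OF i] by (metis sets_distr)
  have swapinv: "distr (\<nu> \<Otimes>\<^sub>M \<nu>) (borel \<Otimes>\<^sub>M borel) (\<lambda>(x,y). (y,x)) = \<nu> \<Otimes>\<^sub>M \<nu>"
    by (rule swap_invariant[OF prob_space_imp_sigma_finite[OF pnu] snu])
  have msum: "(\<lambda>\<omega>. \<Sum>j\<in>?I. outer (X j \<omega>)) \<in> borel_measurable M"
    by (rule borel_measurable_sum) (rule measurable_compose[OF mX outer_measurable])
  have mS[measurable]: "S \<in> borel_measurable M"
    unfolding S_def sample_cov_def by (intro borel_measurable_scaleR borel_measurable_const msum)
  have mind[measurable]: "ind \<in> borel_measurable M" unfolding ind_def by measurable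
  have ind0: "\<And>\<omega>. ind \<omega> \<ge> 0" unfolding ind_def by simp
  have Sdec: "\<And>a b \<omega>. a \<in> ?I \<Longrightarrow> b \<in> ?I \<Longrightarrow> a \<noteq> b \<Longrightarrow>
      S \<omega> = (1 / real n) *\<^sub>R (outer (X a \<omega>) + outer (X b \<omega>) + (\<Sum>j\<in>?I - {a,b}. outer (restrict (\<lambda>j. X j \<omega>) (?I - {a,b}) j)))"
  proof -
    fix a b \<omega> assume ab: "a \<in> ?I" "b \<in> ?I" "a \<noteq> b"
    have "(\<Sum>j\<in>?I - {a,b}. outer (restrict (\<lambda>j. X j \<omega>) (?I - {a,b}) j)) = (\<Sum>j\<in>?I - {a,b}. outer (X j \<omega>))"
      by (rule sum.cong) auto
    then show "S \<omega> = (1 / real n) *\<^sub>R (outer (X a \<omega>) + outer (X b \<omega>) + (\<Sum>j\<in>?I - {a,b}. outer (restrict (\<lambda>j. X j \<omega>) (?I - {a,b}) j)))"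
      unfolding S_def sample_cov_def using sum_split2[of ?I a b "\<lambda>j. outer (X j \<omega>)"] ab by simp
  qed
  have E1: "\<And>a b. a \<in> ?I \<Longrightarrow> b \<in> ?I \<Longrightarrow> a \<noteq> b \<Longrightarrow> J a = J b"
  proof -
    fix a b assume ab: "a \<in> ?I" "b \<in> ?I" "a \<noteq> b"
    note [measurable] = mX[OF ab(1)] mX[OF ab(2)]
    define G where "G = (\<lambda>z::(((real^'p) \<times> (real^'p)) \<times> (nat \<Rightarrow> real^'p)). ennreal (norm (fst (fst z))^4 *
        indicator B ((1 / real n) *\<^sub>R (outer (fst (fst z)) + outer (snd (fst z)) + (\<Sum>j\<in>?I - {a,b}. outer (snd z j))))))"
    have mG: "G \<in> borel_measurable ((borel \<Otimes>\<^sub>M borel) \<Otimes>\<^sub>M PiM (?I - {a,b}) (\<lambda>_. borel))"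
      unfolding G_def by measurable
    have mswap: "(\<lambda>(x,y). (y,x)) \<in> measurable (borel \<Otimes>\<^sub>M borel) (borel \<Otimes>\<^sub>M (borel :: (real^'p) measure))"
      by measurable
    have eq: "(\<integral>\<^sup>+\<omega>. G ((X a \<omega>, X b \<omega>), restrict (\<lambda>j. X j \<omega>) (?I - {a,b})) \<partial>M)
        = (\<integral>\<^sup>+\<omega>. G ((\<lambda>(x,y). (y,x)) (X a \<omega>, X b \<omega>), restrict (\<lambda>j. X j \<omega>) (?I - {a,b})) \<partial>M)"
      by (rule pair_transform_gen[OF indep ab dX[OF ab(1)] dX[OF ab(2)] mswap swapinv mG])
    have l: "(\<integral>\<^sup>+\<omega>. G ((X a \<omega>, X b \<omega>), restrict (\<lambda>j. X j \<omega>) (?I - {a,b})) \<partial>M) = J a"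
      unfolding J_def ind_def G_def by (rule nn_integral_cong) (simp add: Sdec[OF ab])
    have r: "(\<integral>\<^sup>+\<omega>. G ((\<lambda>(x,y). (y,x)) (X a \<omega>, X b \<omega>), restrict (\<lambda>j. X j \<omega>) (?I - {a,b})) \<partial>M) = J b"
      unfolding J_def ind_def G_def by (rule nn_integral_cong) (simp add: Sdec[OF ab] add.commute)
    show "J a = J b" using eq l r by simp
  qed
  have JI: "\<And>a. a \<in> ?I \<Longrightarrow> J a = J i"
    using E1 i by (metis)
  have E2: "\<And>a b. a \<in> ?I \<Longrightarrow> b \<in> ?I \<Longrightarrow> a \<noteq> b \<Longrightarrow>
      (\<integral>\<^sup>+\<omega>. ennreal ((norm (X a \<omega>)^4 + norm (X b \<omega>)^4) * ind \<omega>) \<partial>M)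
    = (\<integral>\<^sup>+\<omega>. ennreal ((norm (fst (rot (X a \<omega>, X b \<omega>)))^4 + norm (snd (rot (X a \<omega>, X b \<omega>)))^4) * ind \<omega>) \<partial>M)"
  proof -
    fix a b assume ab: "a \<in> ?I" "b \<in> ?I" "a \<noteq> b"
    note [measurable] = mX[OF ab(1)] mX[OF ab(2)]
    define G where "G = (\<lambda>z::(((real^'p) \<times> (real^'p)) \<times> (nat \<Rightarrow> real^'p)). ennreal ((norm (fst (fst z))^4 + norm (snd (fst z))^4) *
        indicator B ((1 / real n) *\<^sub>R (outer (fst (fst z)) + outer (snd (fst z)) + (\<Sum>j\<in>?I - {a,b}. outer (snd z j))))))"
    have mG: "G \<in> borel_measurable ((borel \<Otimes>\<^sub>M borel) \<Otimes>\<^sub>M PiM (?I - {a,b}) (\<lambda>_. borel))"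
      unfolding G_def by measurable
    have eq: "(\<integral>\<^sup>+\<omega>. G ((X a \<omega>, X b \<omega>), restrict (\<lambda>j. X j \<omega>) (?I - {a,b})) \<partial>M)
        = (\<integral>\<^sup>+\<omega>. G (rot (X a \<omega>, X b \<omega>), restrict (\<lambda>j. X j \<omega>) (?I - {a,b})) \<partial>M)"
      by (rule pair_transform_gen[OF indep ab dX[OF ab(1)] dX[OF ab(2)] rot_measurable rotinv mG])
    have l: "(\<integral>\<^sup>+\<omega>. G ((X a \<omega>, X b \<omega>), restrict (\<lambda>j. X j \<omega>) (?I - {a,b})) \<partial>M)
        = (\<integral>\<^sup>+\<omega>. ennreal ((norm (X a \<omega>)^4 + norm (X b \<omega>)^4) * ind \<omega>) \<partial>M)"
      unfolding ind_def G_def by (rule nn_integral_cong) (simp add: Sdec[OF ab])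
    have r: "(\<integral>\<^sup>+\<omega>. G (rot (X a \<omega>, X b \<omega>), restrict (\<lambda>j. X j \<omega>) (?I - {a,b})) \<partial>M)
        = (\<integral>\<^sup>+\<omega>. ennreal ((norm (fst (rot (X a \<omega>, X b \<omega>)))^4 + norm (snd (rot (X a \<omega>, X b \<omega>)))^4) * ind \<omega>) \<partial>M)"
      unfolding ind_def G_def by (rule nn_integral_cong) (simp add: Sdec[OF ab] rot_outer)
    show "?thesis a b" using eq l r by simp
  qed
  have n4: "\<And>x::real^'p. norm x ^ 4 = (x \<bullet> x)^2"
    by (metis power2_norm_eq_inner power_mult numeral_Bit0 mult_2_right numeral_One power_even_eq)
  have kk0: "\<And>a b \<omega>. kk a b \<omega> \<ge> 0" unfolding kk_def by simp
  have mkk[measurable]: "\<And>a b. a \<in> ?I \<Longrightarrow> b \<in> ?I \<Longrightarrow> kk a b \<in> borel_measurable M"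
  proof -
    fix a b assume ab: "a \<in> ?I" "b \<in> ?I"
    note [measurable] = mX[OF ab(1)] mX[OF ab(2)]
    show "kk a b \<in> borel_measurable M" unfolding kk_def by measurable
  qed
  have offdiag: "\<And>a b. a \<in> ?I \<Longrightarrow> b \<in> ?I \<Longrightarrow> a \<noteq> b \<Longrightarrow> J i \<noteq> \<infinity> \<Longrightarrow>
      (\<integral>\<^sup>+\<omega>. ennreal (kk a b \<omega> * ind \<omega>) \<partial>M) = J i"
  proof -
    fix a b assume ab: "a \<in> ?I" "b \<in> ?I" "a \<noteq> b" and fin: "J i \<noteq> \<infinity>"
    note [measurable] = mX[OF ab(1)] mX[OF ab(2)]
    have pt: "\<And>\<omega>. ennreal ((norm (fst (rot (X a \<omega>, X b \<omega>)))^4 + norm (snd (rot (X a \<omega>, X b \<omega>)))^4) * ind \<omega>)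
       = ennreal (kk a b \<omega> * ind \<omega>) + (ennreal (1/2) * ennreal (norm (X a \<omega>)^4 * ind \<omega>)
           + ennreal (1/2) * ennreal (norm (X b \<omega>)^4 * ind \<omega>))"
    proof -
      fix \<omega>
      have "(norm (fst (rot (X a \<omega>, X b \<omega>)))^4 + norm (snd (rot (X a \<omega>, X b \<omega>)))^4) * ind \<omega>
          = kk a b \<omega> * ind \<omega> + ((1/2) * (norm (X a \<omega>)^4 * ind \<omega>) + (1/2) * (norm (X b \<omega>)^4 * ind \<omega>))"
        unfolding rot_norm4 kk_def by (simp add: algebra_simps)
      then have "ennreal ((norm (fst (rot (X a \<omega>, X b \<omega>)))^4 + norm (snd (rot (X a \<omega>, X b \<omega>)))^4) * ind \<omega>)
          = ennreal (kk a b \<omega> * ind \<omega> + ((1/2) * (norm (X a \<omega>)^4 * ind \<omega>) + (1/2) * (norm (X b \<omega>)^4 * ind \<omega>)))"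
        by simp
      also have "\<dots> = ennreal (kk a b \<omega> * ind \<omega>) + (ennreal ((1/2) * (norm (X a \<omega>)^4 * ind \<omega>)) + ennreal ((1/2) * (norm (X b \<omega>)^4 * ind \<omega>)))"
      proof -
        have p1: "0 \<le> kk a b \<omega> * ind \<omega>" using ind0[of \<omega>] kk0[of a b \<omega>] by simp
        have p2: "0 \<le> (1/2) * (norm (X a \<omega>)^4 * ind \<omega>)" using ind0[of \<omega>] by simp
        have p3: "0 \<le> (1/2) * (norm (X b \<omega>)^4 * ind \<omega>)" using ind0[of \<omega>] by simp
        show ?thesis by (simp only: ennreal_plus[OF p1 add_nonneg_nonneg[OF p2 p3]] ennreal_plus[OF p2 p3])
      qed
      also have "\<dots> = ennreal (kk a b \<omega> * ind \<omega>) + (ennreal (1/2) * ennreal (norm (X a \<omega>)^4 * ind \<omega>)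
           + ennreal (1/2) * ennreal (norm (X b \<omega>)^4 * ind \<omega>))"
        by (simp only: ennreal_mult'[of "1/2"] divide_nonneg_nonneg zero_le_one zero_le_numeral)
      finally show "?thesis \<omega>" .
    qed
    have "(\<integral>\<^sup>+\<omega>. ennreal ((norm (fst (rot (X a \<omega>, X b \<omega>)))^4 + norm (snd (rot (X a \<omega>, X b \<omega>)))^4) * ind \<omega>) \<partial>M)
        = (\<integral>\<^sup>+\<omega>. ennreal (kk a b \<omega> * ind \<omega>) \<partial>M) + (ennreal (1/2) * J a + ennreal (1/2) * J b)"
    proof -
      have m1: "(\<lambda>\<omega>. ennreal (kk a b \<omega> * ind \<omega>)) \<in> borel_measurable M" using mkk[OF ab(1,2)] by measurable
      have ma: "(\<lambda>\<omega>. ennreal (norm (X a \<omega>)^4 * ind \<omega>)) \<in> borel_measurable M" by measurable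
      have mb: "(\<lambda>\<omega>. ennreal (norm (X b \<omega>)^4 * ind \<omega>)) \<in> borel_measurable M" by measurable
      have ma2: "(\<lambda>\<omega>. ennreal (1/2) * ennreal (norm (X a \<omega>)^4 * ind \<omega>)) \<in> borel_measurable M" by measurable
      have mb2: "(\<lambda>\<omega>. ennreal (1/2) * ennreal (norm (X b \<omega>)^4 * ind \<omega>)) \<in> borel_measurable M" by measurable
      have m23: "(\<lambda>\<omega>. ennreal (1/2) * ennreal (norm (X a \<omega>)^4 * ind \<omega>) + ennreal (1/2) * ennreal (norm (X b \<omega>)^4 * ind \<omega>)) \<in> borel_measurable M" by measurable
      show ?thesis
        unfolding pt J_def
        by (simp only: nn_integral_add[OF m1 m23] nn_integral_add[OF ma2 mb2] nn_integral_cmult[OF ma] nn_integral_cmult[OF mb])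
    qed
    also have "ennreal (1/2) * J a + ennreal (1/2) * J b = J i"
    proof -
      have "ennreal (1/2) * J a + ennreal (1/2) * J b = (ennreal (1/2) + ennreal (1/2)) * J i"
        using JI[OF ab(1)] JI[OF ab(2)] by (simp add: distrib_right)
      also have "ennreal (1/2) + ennreal (1/2) = 1" by (subst ennreal_plus[symmetric]) auto
      finally show ?thesis by simp
    qed
    finally have A: "(\<integral>\<^sup>+\<omega>. ennreal ((norm (fst (rot (X a \<omega>, X b \<omega>)))^4 + norm (snd (rot (X a \<omega>, X b \<omega>)))^4) * ind \<omega>) \<partial>M)
        = (\<integral>\<^sup>+\<omega>. ennreal (kk a b \<omega> * ind \<omega>) \<partial>M) + J i" .
    have "(\<integral>\<^sup>+\<omega>. ennreal ((norm (X a \<omega>)^4 + norm (X b \<omega>)^4) * ind \<omega>) \<partial>M) = J a + J b"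
      unfolding J_def using ind0 by (simp add: distrib_right nn_integral_add)
    also have "\<dots> = J i + J i" using JI[OF ab(1)] JI[OF ab(2)] by simp
    finally have Bq: "(\<integral>\<^sup>+\<omega>. ennreal ((norm (X a \<omega>)^4 + norm (X b \<omega>)^4) * ind \<omega>) \<partial>M) = J i + J i" .
    have "J i + (\<integral>\<^sup>+\<omega>. ennreal (kk a b \<omega> * ind \<omega>) \<partial>M) = J i + J i"
      using E2[OF ab] A Bq by (metis add.commute)
    then show "(\<integral>\<^sup>+\<omega>. ennreal (kk a b \<omega> * ind \<omega>) \<partial>M) = J i"
      using fin by (auto simp: ennreal_add_left_cancel infinity_ennreal_def)
  qed
  have diag: "\<And>a. a \<in> ?I \<Longrightarrow> (\<integral>\<^sup>+\<omega>. ennreal (kk a a \<omega> * ind \<omega>) \<partial>M) = 3 * J i"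
  proof -
    fix a assume a: "a \<in> ?I"
    note [measurable] = mX[OF a]
    have "\<And>\<omega>. ennreal (kk a a \<omega> * ind \<omega>) = 3 * ennreal (norm (X a \<omega>)^4 * ind \<omega>)"
    proof -
      fix \<omega>
      have "kk a a \<omega> * ind \<omega> = 3 * (norm (X a \<omega>)^4 * ind \<omega>)" unfolding kk_def n4
        by (simp add: power2_eq_square)
      then have "ennreal (kk a a \<omega> * ind \<omega>) = ennreal (3 * (norm (X a \<omega>)^4 * ind \<omega>))" by (rule arg_cong)
      also have "\<dots> = ennreal 3 * ennreal (norm (X a \<omega>)^4 * ind \<omega>)" by (rule ennreal_mult') simp
      finally show "?thesis \<omega>" by simp
    qed
    then show "?thesis a" using JI[OF a] unfolding J_def by (simp add: nn_integral_cmult)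
  qed
  define H where "H = (\<integral>\<^sup>+\<omega>. ennreal (hfun n (S \<omega>) * ind \<omega>) \<partial>M)"
  define c where "c = real n * (real n + 2)"
  have c0: "c > 0" unfolding c_def using n1 by simp
  have hsum: "\<And>\<omega>. c * hfun n (S \<omega>) = (\<Sum>a\<in>?I. \<Sum>b\<in>?I. kk a b \<omega>)"
  proof -
    fix \<omega>
    have "S \<omega> = (1 / real n) *\<^sub>R (\<Sum>j\<in>?I. outer (X j \<omega>))" unfolding S_def sample_cov_def ..
    then show "?thesis \<omega>" unfolding c_def kk_def using hfun_sum[OF n1, of "\<lambda>j. X j \<omega>"] by simp
  qed
  have hnn: "\<And>\<omega>. 0 \<le> hfun n (S \<omega>)"
  proof -
    fix \<omega>
    have "0 \<le> c * hfun n (S \<omega>)" unfolding hsum by (intro sum_nonneg kk0)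
    then show "?thesis \<omega>" using c0 by (simp add: zero_le_mult_iff)
  qed
  have mh[measurable]: "(\<lambda>\<omega>. hfun n (S \<omega>)) \<in> borel_measurable M" by measurable
  have pw: "\<And>\<omega>. ennreal (c * (hfun n (S \<omega>) * ind \<omega>)) = (\<Sum>a\<in>?I. \<Sum>b\<in>?I. ennreal (kk a b \<omega> * ind \<omega>))"
  proof -
    fix \<omega>
    have "c * (hfun n (S \<omega>) * ind \<omega>) = (\<Sum>a\<in>?I. \<Sum>b\<in>?I. kk a b \<omega> * ind \<omega>)"
      by (simp only: mult.assoc[symmetric] hsum sum_distrib_right)
    moreover have "(\<Sum>a\<in>?I. \<Sum>b\<in>?I. ennreal (kk a b \<omega> * ind \<omega>)) = ennreal (\<Sum>a\<in>?I. \<Sum>b\<in>?I. kk a b \<omega> * ind \<omega>)"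
      using kk0 ind0 by (simp add: sum_nonneg)
    ultimately show "?thesis \<omega>" by simp
  qed
  have LH: "(\<integral>\<^sup>+\<omega>. ennreal (c * (hfun n (S \<omega>) * ind \<omega>)) \<partial>M) = ennreal c * H"
  proof -
    have "\<And>\<omega>. ennreal (c * (hfun n (S \<omega>) * ind \<omega>)) = ennreal c * ennreal (hfun n (S \<omega>) * ind \<omega>)"
      using c0 by (intro ennreal_mult') simp
    then show ?thesis unfolding H_def by (simp add: nn_integral_cmult)
  qed
  have RH: "(\<integral>\<^sup>+\<omega>. ennreal (c * (hfun n (S \<omega>) * ind \<omega>)) \<partial>M)
      = (\<Sum>a\<in>?I. \<Sum>b\<in>?I. \<integral>\<^sup>+\<omega>. ennreal (kk a b \<omega> * ind \<omega>) \<partial>M)"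
  proof -
    have m2: "\<And>a b. a \<in> ?I \<Longrightarrow> b \<in> ?I \<Longrightarrow> (\<lambda>\<omega>. ennreal (kk a b \<omega> * ind \<omega>)) \<in> borel_measurable M"
      using mkk by measurable
    have m1: "\<And>a. a \<in> ?I \<Longrightarrow> (\<lambda>\<omega>. \<Sum>b\<in>?I. ennreal (kk a b \<omega> * ind \<omega>)) \<in> borel_measurable M"
      using m2 by (intro borel_measurable_sum) auto
    have "(\<integral>\<^sup>+\<omega>. (\<Sum>a\<in>?I. \<Sum>b\<in>?I. ennreal (kk a b \<omega> * ind \<omega>)) \<partial>M)
        = (\<Sum>a\<in>?I. \<integral>\<^sup>+\<omega>. (\<Sum>b\<in>?I. ennreal (kk a b \<omega> * ind \<omega>)) \<partial>M)"
      using m1 by (rule nn_integral_sum)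
    also have "\<dots> = (\<Sum>a\<in>?I. \<Sum>b\<in>?I. \<integral>\<^sup>+\<omega>. ennreal (kk a b \<omega> * ind \<omega>) \<partial>M)"
      by (rule sum.cong[OF refl], rule nn_integral_sum) (use m2 in auto)
    finally show ?thesis by (simp only: pw)
  qed
  have goalJ: "J i = H"
  proof (cases "J i = \<infinity>")
    case True
    define c' where "c' = 3 / c"
    have c'0: "c' > 0" unfolding c'_def using c0 by simp
    have le: "\<And>\<omega>. c' * (norm (X i \<omega>)^4 * ind \<omega>) \<le> hfun n (S \<omega>) * ind \<omega>"
    proof -
      fix \<omega>
      have "kk i i \<omega> \<le> (\<Sum>b\<in>?I. kk i b \<omega>)" using i kk0 by (intro member_le_sum) auto
      also have "\<dots> \<le> (\<Sum>a\<in>?I. \<Sum>b\<in>?I. kk a b \<omega>)" using i kk0 by (intro member_le_sum sum_nonneg) auto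
      also have "\<dots> = c * hfun n (S \<omega>)" by (simp add: hsum)
      finally have "3 * norm (X i \<omega>)^4 \<le> c * hfun n (S \<omega>)"
        unfolding kk_def n4 by (simp add: power2_eq_square)
      then have "c' * norm (X i \<omega>)^4 \<le> hfun n (S \<omega>)"
        unfolding c'_def using c0 by (simp add: field_simps)
      then show "?thesis \<omega>" using ind0[of \<omega>] by (simp add: mult.assoc[symmetric] mult_right_mono)
    qed
    have "ennreal c' * J i \<le> H"
    proof -
      have "ennreal c' * J i = (\<integral>\<^sup>+\<omega>. ennreal (c' * (norm (X i \<omega>)^4 * ind \<omega>)) \<partial>M)"
        unfolding J_def using c'0 mX[OF i] by (subst nn_integral_cmult[symmetric]) (auto simp: ennreal_mult')
      also have "\<dots> \<le> H" unfolding H_def by (intro nn_integral_mono ennreal_leI le)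
      finally show ?thesis .
    qed
    moreover have "ennreal c' * J i = \<infinity>" using True c'0 by (simp add: ennreal_mult_top)
    ultimately have "H = \<infinity>" by (simp add: top_unique)
    then show ?thesis using True by simp
  next
    case False
    have card: "card ?I = n" by simp
    have rowsum: "\<And>a. a \<in> ?I \<Longrightarrow> (\<Sum>b\<in>?I. \<integral>\<^sup>+\<omega>. ennreal (kk a b \<omega> * ind \<omega>) \<partial>M) = of_nat n * J i + 2 * J i"
    proof -
      fix a assume a: "a \<in> ?I"
      have "(\<Sum>b\<in>?I. \<integral>\<^sup>+\<omega>. ennreal (kk a b \<omega> * ind \<omega>) \<partial>M) = (\<Sum>b\<in>?I. J i + (if b = a then 2 * J i else 0))"
      proof (rule sum.cong[OF refl])
        fix b assume b: "b \<in> ?I"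
        show "(\<integral>\<^sup>+\<omega>. ennreal (kk a b \<omega> * ind \<omega>) \<partial>M) = J i + (if b = a then 2 * J i else 0)"
        proof (cases "b = a")
          case True
          have e3: "J i + 2 * J i = (1 + 2) * J i" by (simp only: distrib_right mult_1)
          have "(1 + 2 :: ennreal) = 3" by simp
          with e3 have "J i + 2 * J i = 3 * J i" by simp
          then show ?thesis using diag[OF a] True by simp
        next
          case False
          then show ?thesis using offdiag[OF a b _ \<open>J i \<noteq> \<infinity>\<close>] by simp
        qed
      qed
      also have "\<dots> = (\<Sum>b\<in>?I. J i) + (\<Sum>b\<in>?I. (if b = a then 2 * J i else 0))"
        by (rule sum.distrib)
      also have "(\<Sum>b\<in>?I. J i) = of_nat n * J i" by (simp only: sum_constant card)
      also have "(\<Sum>b\<in>?I. (if b = a then 2 * J i else 0)) = 2 * J i" using a by (subst sum.delta) simp_all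
      finally show "?thesis a" .
    qed
    have "ennreal c * H = (\<Sum>a\<in>?I. of_nat n * J i + 2 * J i)"
    proof -
      have "ennreal c * H = (\<Sum>a\<in>?I. \<Sum>b\<in>?I. \<integral>\<^sup>+\<omega>. ennreal (kk a b \<omega> * ind \<omega>) \<partial>M)"
        using LH RH by simp
      also have "\<dots> = (\<Sum>a\<in>?I. of_nat n * J i + 2 * J i)"
        by (rule sum.cong[OF refl]) (rule rowsum)
      finally show ?thesis .
    qed
    also have "\<dots> = of_nat n * (of_nat n * J i + 2 * J i)" by (simp only: sum_constant card)
    also have "\<dots> = (of_nat n * (of_nat n + 2)) * J i" by (simp only: distrib_left distrib_right mult.assoc)
    also have "of_nat n * (of_nat n + 2) = ennreal c"
    proof -
      have "ennreal c = ennreal (real n) * ennreal (real n + 2)" unfolding c_def by (rule ennreal_mult) simp_all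
      also have "ennreal (real n + 2) = ennreal (real n) + 2" by (subst ennreal_plus) simp_all
      finally show ?thesis by (simp add: ennreal_of_nat_eq_real_of_nat)
    qed
    finally have "ennreal c * H = ennreal c * J i" .
    then show ?thesis using c0 by (simp add: ennreal_mult_cancel_left)
  qed
  show ?thesis using goalJ unfolding J_def H_def ind_def S_def by simp
qed

lemma hfun_nonneg:
  fixes f :: "nat \<Rightarrow> real^'p"
  assumes "n \<ge> 1"
  shows "0 \<le> hfun n ((1 / real n) *\<^sub>R (\<Sum>j\<in>{1..n}. outer (f j)))"
proof -
  have "0 \<le> real n * (real n + 2) * hfun n ((1 / real n) *\<^sub>R (\<Sum>j\<in>{1..n}. outer (f j)))"
    unfolding hfun_sum[OF assms] by (intro sum_nonneg) simp
  moreover have "real n * (real n + 2) > 0" using assms by simp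
  ultimately show ?thesis by (simp add: zero_le_mult_iff)
qed

theorem lemma3:
  fixes M :: "'a measure" and Sig :: "real^'p^'p"
    and X :: "nat \<Rightarrow> 'a \<Rightarrow> real^'p" and n :: nat and i :: nat
  assumes "prob_space M"
    and "n \<ge> 1"
    and "sym_pos_def_matrix Sig"
    and "prob_space.indep_vars M (\<lambda>_. borel) X {1..n}"
    and "\<And>j. j \<in> {1..n} \<Longrightarrow>
           distributed M lborel (X j) (\<lambda>x. ennreal (mvn_density Sig x))"
    and "i \<in> {1..n}"
  shows "AE \<omega> in M.
           real_cond_exp M (vimage_algebra (space M) (sample_cov n X) borel)
             (\<lambda>\<omega>. norm (X i \<omega>) ^ 4) \<omega>
         = real n / (real n + 2) *
             (2 * trace (sample_cov n X \<omega> ** sample_cov n X \<omega>)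
              + (trace (sample_cov n X \<omega>))\<^sup>2)"
proof -
  interpret prob_space M by (rule assms(1))
  let ?I = "{1..n}"
  define \<phi> where "\<phi> = (\<lambda>x. ennreal (mvn_density Sig x))"
  define \<nu> where "\<nu> = density lborel \<phi>"
  have dist: "\<And>j. j \<in> ?I \<Longrightarrow> distributed M lborel (X j) \<phi>" using assms(5) unfolding \<phi>_def .
  have mXl: "\<And>j. j \<in> ?I \<Longrightarrow> X j \<in> measurable M lborel" using dist by (simp add: distributed_def)
  have mX: "\<And>j. j \<in> ?I \<Longrightarrow> X j \<in> borel_measurable M"
    using mXl by (simp add: measurable_cong_sets[OF refl sets_lborel])
  have dX: "\<And>j. j \<in> ?I \<Longrightarrow> distr M borel (X j) = \<nu>"
  proof -
    fix j assume j: "j \<in> ?I"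
    have "distr M borel (X j) = distr M lborel (X j)" by (rule distr_cong) simp_all
    also have "\<dots> = \<nu>" using dist[OF j] unfolding \<nu>_def by (simp add: distributed_def)
    finally show "distr M borel (X j) = \<nu>" .
  qed
  have phim: "\<phi> \<in> borel_measurable borel"
    using dist[OF assms(6)] by (simp add: distributed_def measurable_cong_sets[OF sets_lborel refl])
  have sfnu: "sigma_finite_measure (density lborel \<phi>)"
    using prob_space_distr[OF mX[OF assms(6)]] dX[OF assms(6)] unfolding \<nu>_def
    by (simp add: prob_space_imp_sigma_finite)
  have rotinv: "distr (\<nu> \<Otimes>\<^sub>M \<nu>) (borel \<Otimes>\<^sub>M borel) rot = \<nu> \<Otimes>\<^sub>M \<nu>"
    unfolding \<nu>_def by (rule density_rot_invariant[OF phim sfnu]) (simp add: \<phi>_def mvn_rot_enn)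
  define S where "S = sample_cov n X"
  have msum: "(\<lambda>\<omega>. \<Sum>j\<in>?I. outer (X j \<omega>)) \<in> borel_measurable M"
    by (rule borel_measurable_sum) (rule measurable_compose[OF mX outer_measurable])
  have mS[measurable]: "S \<in> borel_measurable M"
    unfolding S_def sample_cov_def by (intro borel_measurable_scaleR borel_measurable_const msum)
  define F where "F = vimage_algebra (space M) S borel"
  have sF: "sets F = {S -` A \<inter> space M | A. A \<in> sets borel}"
    unfolding F_def by (rule sets_vimage_algebra2) simp
  have subalg: "subalgebra M F"
    unfolding subalgebra_def
  proof (intro conjI)
    show "space F = space M" by (simp add: F_def)
    show "sets F \<subseteq> sets M" unfolding sF using mS by (auto intro: measurable_sets)
  qed
  interpret fs: finite_measure_subalgebra M F by unfold_locales (rule subalg)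
  define f where "f = (\<lambda>\<omega>. norm (X i \<omega>)^4)"
  define g where "g = (\<lambda>\<omega>. hfun n (S \<omega>))"
  have mSF: "S \<in> measurable F borel" unfolding F_def by (rule measurable_vimage_algebra1) simp
  have mg: "g \<in> borel_measurable F" unfolding g_def by (rule measurable_compose[OF mSF hfun_measurable])
  have mf: "f \<in> borel_measurable M" using mX[OF assms(6)] unfolding f_def by measurable
  have gnn: "\<And>\<omega>. 0 \<le> g \<omega>" unfolding g_def S_def sample_cov_def by (rule hfun_nonneg[OF assms(2)])
  have charpos: "AE \<omega> in M. ennreal (g \<omega>) = nn_cond_exp M F (\<lambda>\<omega>. ennreal (f \<omega>)) \<omega>"
  proof (rule fs.nn_cond_exp_charact)
    fix A assume "A \<in> sets F"
    then obtain B where B: "B \<in> sets borel" "A = S -` B \<inter> space M" by (auto simp: sF)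
    have "(\<integral>\<^sup>+x\<in>A. ennreal (f x) \<partial>M) = (\<integral>\<^sup>+x. ennreal (f x * indicator B (S x)) \<partial>M)"
      by (rule nn_integral_cong) (auto simp: B split: split_indicator)
    also have "\<dots> = (\<integral>\<^sup>+x. ennreal (g x * indicator B (S x)) \<partial>M)"
      unfolding f_def g_def S_def by (rule core[OF assms(1,2,4) mX dX rotinv assms(6) B(1)])
    also have "\<dots> = (\<integral>\<^sup>+x\<in>A. ennreal (g x) \<partial>M)"
      by (rule nn_integral_cong) (auto simp: B split: split_indicator)
    finally show "(\<integral>\<^sup>+x\<in>A. ennreal (f x) \<partial>M) = (\<integral>\<^sup>+x\<in>A. ennreal (g x) \<partial>M)" .
  next
    show "(\<lambda>x. ennreal (f x)) \<in> borel_measurable M" using mf by measurable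
  next
    show "(\<lambda>x. ennreal (g x)) \<in> borel_measurable F" using mg by measurable
  qed
  have charneg: "AE \<omega> in M. 0 = nn_cond_exp M F (\<lambda>\<omega>. ennreal (- f \<omega>)) \<omega>"
  proof (rule fs.nn_cond_exp_charact)
    fix A assume "A \<in> sets F"
    show "(\<integral>\<^sup>+x\<in>A. ennreal (- f x) \<partial>M) = (\<integral>\<^sup>+x\<in>A. 0 \<partial>M)"
      by (rule nn_integral_cong) (simp add: f_def ennreal_neg)
  next
    show "(\<lambda>x. ennreal (- f x)) \<in> borel_measurable M" using mf by measurable
  qed simp
  have "AE \<omega> in M. real_cond_exp M F f \<omega> = g \<omega>"
    using charpos charneg
  proof eventually_elim
    case (elim \<omega>)
    then show ?case using gnn[of \<omega>] unfolding real_cond_exp_def by (simp flip: elim)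
  qed
  then show ?thesis unfolding F_def S_def f_def g_def hfun_def .
qed

end
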